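(* Let $X$ be an eventually dendric shift space. For every $k\ge1$ there exists $n\ge1$ such that $\mathcal E_k(w)$ is a simple tree for every $w\in\mathcal L_{\ge n}(X)$.
   Context: $A$ is a finite alphabet; a shift space is a closed shift-invariant subset $X\subseteq A^{\mathbb Z}$; $\mathcal L(X)$ is its set of finite factors, $\mathcal L_n(X)=\mathcal L(X)\cap A^n$, $\mathcal L_{\ge n}(X)=\bigcup_{j\ge n}\mathcal L_j(X)$. For $w\in\mathcal L(X)$ and $k\ge1$: $L_k(w)=\{u\in\mathcal L_k(X):uw\in\mathcal L(X)\}$, $R_k(w)=\{v\in\mathcal L_k(X):wv\in\mathcal L(X)\}$, and the extension graph $\mathcal E_k(w)$ is the undirected bipartite graph with vertex set the disjoint union of $L_k(w)$ and $R_k(w)$ and an edge $(u,v)$ iff $uwv\in\mathcal L(X)$. $X$ is eventually dendric if for some $m\ge0$, $\mathcal E_1(w)$ is a tree for every $w\in\mathcal L_{\ge m}(X)$. A tree is simple if its diameter (maximal length of a simple path) is at most $3$. *)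

theory Defs
  imports "HOL-Analysis.Analysis"
begin

definition shift_map :: "(int \<Rightarrow> 'a) \<Rightarrow> (int \<Rightarrow> 'a)" where
  "shift_map x = (\<lambda>i. x (i + 1))"

definition shift_space :: "(int \<Rightarrow> 'a::finite) set \<Rightarrow> bool" where
  "shift_space X \<longleftrightarrow>
     closedin (product_topology (\<lambda>_. discrete_topology UNIV) UNIV) X \<and>
     shift_map ` X = X"

definition factor_at :: "(int \<Rightarrow> 'a) \<Rightarrow> int \<Rightarrow> nat \<Rightarrow> 'a list" where
  "factor_at x i n = map (\<lambda>j. x (i + int j)) [0..<n]"

definition lang :: "(int \<Rightarrow> 'a) set \<Rightarrow> 'a list set" where
  "lang X = {w. \<exists>x\<in>X. \<exists>i. w = factor_at x i (length w)}"

definition lang_n :: "(int \<Rightarrow> 'a) set \<Rightarrow> nat \<Rightarrow> 'a list set" where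
  "lang_n X n = {w \<in> lang X. length w = n}"

definition lang_ge :: "(int \<Rightarrow> 'a) set \<Rightarrow> nat \<Rightarrow> 'a list set" where
  "lang_ge X n = {w \<in> lang X. n \<le> length w}"

definition left_ext :: "(int \<Rightarrow> 'a) set \<Rightarrow> nat \<Rightarrow> 'a list \<Rightarrow> 'a list set" where
  "left_ext X k w = {u \<in> lang_n X k. u @ w \<in> lang X}"

definition right_ext :: "(int \<Rightarrow> 'a) set \<Rightarrow> nat \<Rightarrow> 'a list \<Rightarrow> 'a list set" where
  "right_ext X k w = {v \<in> lang_n X k. w @ v \<in> lang X}"

definition ext_vertices :: "(int \<Rightarrow> 'a) set \<Rightarrow> nat \<Rightarrow> 'a list \<Rightarrow> ('a list + 'a list) set" where
  "ext_vertices X k w = Inl ` left_ext X k w \<union> Inr ` right_ext X k w"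

definition ext_adj :: "(int \<Rightarrow> 'a) set \<Rightarrow> nat \<Rightarrow> 'a list \<Rightarrow> ('a list + 'a list) \<Rightarrow> ('a list + 'a list) \<Rightarrow> bool" where
  "ext_adj X k w a b =
     (a \<in> ext_vertices X k w \<and> b \<in> ext_vertices X k w \<and>
      (case (a, b) of
         (Inl u, Inr v) \<Rightarrow> u @ w @ v \<in> lang X
       | (Inr v, Inl u) \<Rightarrow> u @ w @ v \<in> lang X
       | _ \<Rightarrow> False))"

definition is_path :: "'v set \<Rightarrow> ('v \<Rightarrow> 'v \<Rightarrow> bool) \<Rightarrow> 'v list \<Rightarrow> bool" where
  "is_path V E ps \<longleftrightarrow> ps \<noteq> [] \<and> distinct ps \<and> set ps \<subseteq> V \<and>
     (\<forall>i. Suc i < length ps \<longrightarrow> E (ps ! i) (ps ! Suc i))"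

definition connected_graph :: "'v set \<Rightarrow> ('v \<Rightarrow> 'v \<Rightarrow> bool) \<Rightarrow> bool" where
  "connected_graph V E \<longleftrightarrow> V \<noteq> {} \<and>
     (\<forall>a\<in>V. \<forall>b\<in>V. \<exists>ps. is_path V E ps \<and> hd ps = a \<and> last ps = b)"

definition has_cycle :: "'v set \<Rightarrow> ('v \<Rightarrow> 'v \<Rightarrow> bool) \<Rightarrow> bool" where
  "has_cycle V E \<longleftrightarrow> (\<exists>ps. is_path V E ps \<and> 3 \<le> length ps \<and> E (last ps) (hd ps))"

definition is_tree :: "'v set \<Rightarrow> ('v \<Rightarrow> 'v \<Rightarrow> bool) \<Rightarrow> bool" where
  "is_tree V E \<longleftrightarrow> connected_graph V E \<and> \<not> has_cycle V E"

definition is_simple_tree :: "'v set \<Rightarrow> ('v \<Rightarrow> 'v \<Rightarrow> bool) \<Rightarrow> bool" where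
  "is_simple_tree V E \<longleftrightarrow> is_tree V E \<and> (\<forall>ps. is_path V E ps \<longrightarrow> length ps - 1 \<le> 3)"

definition eventually_dendric :: "(int \<Rightarrow> 'a) set \<Rightarrow> bool" where
  "eventually_dendric X \<longleftrightarrow>
     (\<exists>m. \<forall>w \<in> lang_ge X m. is_tree (ext_vertices X 1 w) (ext_adj X 1 w))"

end

theory Submission
  imports Defs
begin

lemma path_sub:
  assumes "is_path V E ps" "V \<subseteq> V'" "\<And>x y. E x y \<Longrightarrow> E' x y"
  shows "is_path V' E' ps"
proof -
  have "ps \<noteq> []" "distinct ps" "set ps \<subseteq> V" "\<forall>i. Suc i < length ps \<longrightarrow> E (ps ! i) (ps ! Suc i)"
    using assms(1) unfolding is_path_def by auto
  then show ?thesis unfolding is_path_def using assms(2,3) by blast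
qed

lemma path_take:
  assumes "is_path V E ps" "0 < j"
  shows "is_path V E (take j ps)"
proof -
  have a: "ps \<noteq> []" "distinct ps" "set ps \<subseteq> V" "\<And>i. Suc i < length ps \<Longrightarrow> E (ps ! i) (ps ! Suc i)"
    using assms(1) unfolding is_path_def by auto
  have "take j ps \<noteq> []" using a(1) assms(2) by simp
  moreover have "distinct (take j ps)" using a(2) by simp
  moreover have "set (take j ps) \<subseteq> V" using a(3) set_take_subset by fast
  moreover have "E (take j ps ! i) (take j ps ! Suc i)" if "Suc i < length (take j ps)" for i
    using that a(4)[of i] by simp
  ultimately show ?thesis unfolding is_path_def by blast
qed


lemma path_drop:
  assumes "is_path V E ps" "i < length ps"
  shows "is_path V E (drop i ps)"
proof -
  have a: "ps \<noteq> []" "distinct ps" "set ps \<subseteq> V" "\<And>i. Suc i < length ps \<Longrightarrow> E (ps ! i) (ps ! Suc i)"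
    using assms(1) unfolding is_path_def by auto
  have "drop i ps \<noteq> []" using assms(2) by simp
  moreover have "distinct (drop i ps)" using a(2) by simp
  moreover have "set (drop i ps) \<subseteq> V" using a(3) set_drop_subset by fast
  moreover have "E (drop i ps ! j) (drop i ps ! Suc j)" if "Suc j < length (drop i ps)" for j
  proof -
    have "Suc (i + j) < length ps" using that by simp
    then have "E (ps ! (i+j)) (ps ! Suc (i+j))" by (rule a(4))
    then show ?thesis using that by simp
  qed
  ultimately show ?thesis unfolding is_path_def by blast
qed

lemma path_snoc:
  assumes "is_path V E ps" "E (last ps) d" "d \<notin> set ps" "d \<in> V"
  shows "is_path V E (ps @ [d])"
proof -
  have a: "ps \<noteq> []" "distinct ps" "set ps \<subseteq> V" "\<And>i. Suc i < length ps \<Longrightarrow> E (ps ! i) (ps ! Suc i)"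
    using assms(1) unfolding is_path_def by auto
  have "distinct (ps @ [d])" using a(2) assms(3) by simp
  moreover have "set (ps @ [d]) \<subseteq> V" using a(3) assms(4) by simp
  moreover have "E ((ps @ [d]) ! i) ((ps @ [d]) ! Suc i)" if "Suc i < length (ps @ [d])" for i
  proof (cases "Suc i < length ps")
    case True
    then show ?thesis using a(4)[OF True] by (simp add: nth_append)
  next
    case False
    then have "i = length ps - 1" "Suc i = length ps" using that a(1) by auto
    then show ?thesis using assms(2) a(1) by (simp add: nth_append last_conv_nth)
  qed
  ultimately show ?thesis unfolding is_path_def by simp
qed

lemma walk_to_path:
  assumes "E\<^sup>*\<^sup>* a b" "a \<in> V" "\<And>x y. E x y \<Longrightarrow> y \<in> V"
  shows "\<exists>ps. is_path V E ps \<and> hd ps = a \<and> last ps = b"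
  using assms(1)
proof (induction rule: rtranclp_induct)
  case base
  have "is_path V E [a]" using assms(2) unfolding is_path_def by simp
  then show ?case by (intro exI[of _ "[a]"]) simp
next
  case (step c d)
  then obtain ps where ps: "is_path V E ps" "hd ps = a" "last ps = c" by blast
  have ne: "ps \<noteq> []" using ps(1) unfolding is_path_def by simp
  show ?case
  proof (cases "d \<in> set ps")
    case True
    then obtain i where i: "i < length ps" "ps ! i = d" by (auto simp: in_set_conv_nth)
    have "is_path V E (take (Suc i) ps)" using path_take[OF ps(1)] by simp
    moreover have "hd (take (Suc i) ps) = a" using ps(2) ne by (simp add: hd_take)
    moreover have "last (take (Suc i) ps) = d" using i
      by (simp add: take_Suc_conv_app_nth)
    ultimately show ?thesis by blast
  next
    case False
    have "is_path V E (ps @ [d])" using path_snoc[OF ps(1)] ps(3) step(2) False assms(3)[OF step(2)] by simp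
    moreover have "hd (ps @ [d]) = a" using ps(2) ne by simp
    ultimately show ?thesis by (intro exI[of _ "ps @ [d]"]) simp
  qed
qed

lemma path_walk:
  assumes "is_path V E ps" shows "E\<^sup>*\<^sup>* (hd ps) (last ps)"
proof -
  have a: "ps \<noteq> []" "\<And>i. Suc i < length ps \<Longrightarrow> E (ps ! i) (ps ! Suc i)"
    using assms(1) unfolding is_path_def by auto
  have "\<forall>j. j < length ps \<longrightarrow> E\<^sup>*\<^sup>* (ps ! 0) (ps ! j)"
  proof (intro allI impI)
    fix j assume "j < length ps"
    then show "E\<^sup>*\<^sup>* (ps ! 0) (ps ! j)"
    proof (induction j)
      case 0 then show ?case by simp
    next
      case (Suc j)
      then have "E\<^sup>*\<^sup>* (ps ! 0) (ps ! j)" by simp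
      moreover have "E (ps ! j) (ps ! Suc j)" using a(2) Suc.prems by blast
      ultimately show ?case by (rule rtranclp.rtrancl_into_rtrancl)
    qed
  qed
  then show ?thesis using a(1) by (simp add: hd_conv_nth last_conv_nth)
qed

lemma low_degree_vertex:
  assumes fin: "finite V" and ne: "V \<noteq> {}" and sym: "\<And>x y. E x y \<Longrightarrow> E y x"
    and inV: "\<And>x y. E x y \<Longrightarrow> x \<in> V \<and> y \<in> V" and irr: "\<And>x. \<not> E x x"
    and nc: "\<not> has_cycle V E"
  shows "\<exists>v\<in>V. card {u. E v u} \<le> 1"
proof -
  obtain v0 where "v0 \<in> V" using ne by blast
  have p0: "is_path V E [v0]" using \<open>v0 \<in> V\<close> by (simp add: is_path_def)
  have bnd: "\<forall>ps. is_path V E ps \<longrightarrow> length ps < Suc (card V)"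
    unfolding is_path_def by (metis card_mono distinct_card fin less_Suc_eq_le)
  obtain ps where ps: "is_path V E ps" and mx: "\<And>qs. is_path V E qs \<Longrightarrow> length qs \<le> length ps"
    using ex_has_greatest_nat[where P="is_path V E" and f=length, OF p0 bnd] by blast
  define v where "v = last ps"
  have vV: "v \<in> V" using ps unfolding v_def is_path_def by auto
  have "card {u. E v u} \<le> 1"
  proof (rule ccontr)
    assume neg: "\<not> ?thesis"
    have finN: "finite {u. E v u}" using inV by (auto intro: finite_subset[OF _ fin])
    obtain a b where ab: "E v a" "E v b" "a \<noteq> b"
    proof -
      from neg have "2 \<le> card {u. E v u}" by simp
      then obtain S where "S \<subseteq> {u. E v u}" "card S = 2"
        by (meson obtain_subset_with_card_n)
      then show ?thesis using that by (auto simp: card_2_iff)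
    qed
    show False
    proof (cases "length ps = 1")
      case True
      then obtain z where z: "ps = [z]" by (cases ps) auto
      have aV: "a \<in> V" using inV[OF ab(1)] by simp
      have "v \<noteq> a" using irr ab(1) by metis
      have "is_path V E [v, a]" unfolding is_path_def
      proof (intro conjI allI impI)
        fix i assume "Suc i < length [v, a]"
        then have "i = 0" by simp
        then show "E ([v, a] ! i) ([v, a] ! Suc i)" using ab(1) by simp
      qed (use vV aV \<open>v \<noteq> a\<close> in auto)
      then have "length [v, a] \<le> length ps" by (rule mx)
      then have "2 \<le> length ps" by simp
      with True show False by simp
    next
      case False
      have "ps \<noteq> []" using ps unfolding is_path_def by simp
      then have len: "2 \<le> length ps" using False by (cases ps) (auto simp: Suc_le_eq)
      define p where "p = ps ! (length ps - 2)"
      obtain c where c: "E v c" "c \<noteq> p" using ab by blast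
      have lastv: "ps ! (length ps - 1) = v" using \<open>ps \<noteq> []\<close> by (simp add: v_def last_conv_nth)
      show False
      proof (cases "c \<in> set ps")
        case False
        have "is_path V E (ps @ [c])" using path_snoc[OF ps] c False inV v_def by auto
        with mx show False by fastforce
      next
        case True
        then obtain i where i: "i < length ps" "ps ! i = c" by (auto simp: in_set_conv_nth)
        have "i \<noteq> length ps - 1" using i lastv irr c by auto
        moreover have "i \<noteq> length ps - 2" using i c p_def by auto
        ultimately have i3: "i + 3 \<le> length ps" using i len by linarith
        have "is_path V E (drop i ps)" by (rule path_drop[OF ps i(1)])
        moreover have "3 \<le> length (drop i ps)" using i3 by simp
        moreover have "hd (drop i ps) = c" using i by (simp add: hd_drop_conv_nth)
        moreover have "last (drop i ps) = v" using i by (simp add: v_def)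
        ultimately have "has_cycle V E" unfolding has_cycle_def using c by metis
        with nc show False by simp
      qed
    qed
  qed
  with vV show ?thesis by blast
qed

definition uedges :: "('v \<Rightarrow> 'v \<Rightarrow> bool) \<Rightarrow> 'v set set" where
  "uedges E = {{x, y} | x y. E x y}"

lemma forest_bound:
  "finite V \<Longrightarrow> V \<noteq> {} \<Longrightarrow> card V = n \<Longrightarrow> (\<And>x y. E x y \<Longrightarrow> E y x) \<Longrightarrow>
   (\<And>x y. E x y \<Longrightarrow> x \<in> V \<and> y \<in> V) \<Longrightarrow> (\<And>x. \<not> E x x) \<Longrightarrow> \<not> has_cycle V E \<Longrightarrow>
   card (uedges E) + 1 \<le> card V"
proof (induction n arbitrary: V E)
  case 0 then show ?case by simp
next
  case (Suc n)
  obtain v where v: "v \<in> V" "card {u. E v u} \<le> 1"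
    using low_degree_vertex[of V E] Suc.prems by blast
  show ?case
  proof (cases "n = 0")
    case True
    then have "V = {v}" using Suc.prems(1,3) v by (metis card_1_singletonE One_nat_def singletonD)
    then have "uedges E = {}" using Suc.prems(5,6) unfolding uedges_def by fastforce
    then show ?thesis using Suc.prems(3) True by simp
  next
    case False
    define V' where "V' = V - {v}"
    define E' where "E' = (\<lambda>x y. E x y \<and> x \<noteq> v \<and> y \<noteq> v)"
    have V'ne: "V' \<noteq> {}" using False Suc.prems(1,3) v unfolding V'_def
      by (metis One_nat_def card_Diff_singleton diff_Suc_1 card.empty)
    have cV': "card V' = n" using Suc.prems(1,3) v unfolding V'_def by simp
    have ncE': "\<not> has_cycle V' E'"
      using Suc.prems(7) unfolding has_cycle_def
      by (metis (no_types, lifting) E'_def Diff_subset V'_def path_sub)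
    have IH: "card (uedges E') + 1 \<le> card V'"
    proof (rule Suc.IH[OF _ V'ne cV' _ _ _ ncE'])
      show "finite V'" using Suc.prems(1) by (simp add: V'_def)
      show "E' y x" if "E' x y" for x y using that Suc.prems(4) unfolding E'_def by blast
      show "x \<in> V' \<and> y \<in> V'" if "E' x y" for x y using that Suc.prems(5)[of x y] by (simp add: E'_def V'_def)
      show "\<not> E' x x" for x using Suc.prems(6) by (simp add: E'_def)
    qed
    have sub: "uedges E \<subseteq> uedges E' \<union> (\<lambda>u. {v, u}) ` {u. E v u}"
    proof
      fix e assume "e \<in> uedges E"
      then obtain x y where e: "e = {x, y}" "E x y" unfolding uedges_def by blast
      show "e \<in> uedges E' \<union> (\<lambda>u. {v, u}) ` {u. E v u}"
      proof (cases "x = v \<or> y = v")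
        case True
        then show ?thesis
        proof
          assume "x = v" then show ?thesis using e by blast
        next
          assume "y = v" then have "E v x" "e = {v, x}" using e Suc.prems(4) by (blast, blast)
          then show ?thesis by blast
        qed
      next
        case False
        then have "E' x y" using e unfolding E'_def by blast
        then show ?thesis using e unfolding uedges_def by blast
      qed
    qed
    have finE': "finite (uedges E')"
      by (rule finite_subset[of _ "Pow V"]) (use Suc.prems(1,5) in \<open>auto simp: uedges_def E'_def\<close>)
    have finN: "finite {u. E v u}" using Suc.prems(5) by (auto intro: finite_subset[OF _ Suc.prems(1)])
    have "card (uedges E) \<le> card (uedges E' \<union> (\<lambda>u. {v, u}) ` {u. E v u})"
      by (rule card_mono) (use finE' finN sub in auto)
    also have "\<dots> \<le> card (uedges E') + card ((\<lambda>u. {v, u}) ` {u. E v u})" by (rule card_Un_le)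
    also have "\<dots> \<le> card (uedges E') + 1" using card_image_le[OF finN, of "\<lambda>u. {v, u}"] v by simp
    finally show ?thesis using IH cV' Suc.prems(3) by simp
  qed
qed


definition LE :: "'a list set \<Rightarrow> nat \<Rightarrow> 'a list \<Rightarrow> 'a list set" where
  "LE L a y = {u. length u = a \<and> u @ y \<in> L}"
definition RE :: "'a list set \<Rightarrow> nat \<Rightarrow> 'a list \<Rightarrow> 'a list set" where
  "RE L c y = {v. length v = c \<and> y @ v \<in> L}"
definition GV :: "'a list set \<Rightarrow> nat \<Rightarrow> nat \<Rightarrow> 'a list \<Rightarrow> ('a list + 'a list) set" where
  "GV L a c y = Inl ` LE L a y \<union> Inr ` RE L c y"
definition GA :: "'a list set \<Rightarrow> nat \<Rightarrow> nat \<Rightarrow> 'a list \<Rightarrow> ('a list + 'a list) \<Rightarrow> ('a list + 'a list) \<Rightarrow> bool" where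
  "GA L a c y p q = (case (p, q) of
      (Inl u, Inr v) \<Rightarrow> length u = a \<and> length v = c \<and> u @ y @ v \<in> L
    | (Inr v, Inl u) \<Rightarrow> length u = a \<and> length v = c \<and> u @ y @ v \<in> L
    | _ \<Rightarrow> False)"
definition CONN :: "'a list set \<Rightarrow> nat \<Rightarrow> nat \<Rightarrow> 'a list \<Rightarrow> bool" where
  "CONN L a c y = (\<forall>p\<in>GV L a c y. \<forall>q\<in>GV L a c y. (GA L a c y)\<^sup>*\<^sup>* p q)"
definition rc :: "'a list set \<Rightarrow> 'a list \<Rightarrow> nat" where
  "rc L z = card {b. z @ [b] \<in> L}"

lemma GA_simps [simp]:
  "GA L a c y (Inl u) (Inr v) = (length u = a \<and> length v = c \<and> u @ y @ v \<in> L)"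
  "GA L a c y (Inr v) (Inl u) = (length u = a \<and> length v = c \<and> u @ y @ v \<in> L)"
  "GA L a c y (Inl u) (Inl u') = False"
  "GA L a c y (Inr v) (Inr v') = False"
  by (simp_all add: GA_def)

lemma GA_sym: "GA L a c y p q \<Longrightarrow> GA L a c y q p"
  by (cases p; cases q) auto

lemma rtranclp_sym: assumes "\<And>x y. R x y \<Longrightarrow> R y x" "R\<^sup>*\<^sup>* p q" shows "R\<^sup>*\<^sup>* q p"
  using assms(2)
proof (induction rule: rtranclp_induct)
  case base then show ?case by simp
next
  case (step y z)
  then show ?case using assms(1) by (metis converse_rtranclp_into_rtranclp)
qed

lemma rtranclp_map: assumes "\<And>p q. R p q \<Longrightarrow> R' (f p) (f q)" "R\<^sup>*\<^sup>* p q" shows "R'\<^sup>*\<^sup>* (f p) (f q)"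
  using assms(2)
proof (induction rule: rtranclp_induct)
  case base then show ?case by simp
next
  case (step y z)
  then show ?case using assms(1) by (metis rtranclp.rtrancl_into_rtrancl)
qed

lemma finite_len: "finite {xs :: 'a::finite list. length xs = n}"
  using finite_lists_length_eq[of "UNIV :: 'a set" n] by simp

locale wl =
  fixes L :: "'a::finite list set" and m :: nat
  assumes fact: "u @ v @ w \<in> L \<Longrightarrow> v \<in> L"
    and lext: "y \<in> L \<Longrightarrow> \<exists>a. a # y \<in> L"
    and rext: "y \<in> L \<Longrightarrow> \<exists>b. y @ [b] \<in> L"
    and conn1: "y \<in> L \<Longrightarrow> m \<le> length y \<Longrightarrow> CONN L 1 1 y"
    and forest1: "y \<in> L \<Longrightarrow> m \<le> length y \<Longrightarrow>
       card {(a, b). a # y @ [b] \<in> L} + 1 \<le> card {a. a # y \<in> L} + card {b. y @ [b] \<in> L}"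
begin

lemma pre: "u @ v \<in> L \<Longrightarrow> u \<in> L"
  using fact[of "[]" u v] by simp
lemma suf: "u @ v \<in> L \<Longrightarrow> v \<in> L"
  using fact[of u v "[]"] by simp

lemma rc_suffix: "rc L (u @ z) \<le> rc L z"
proof -
  have "{b. (u @ z) @ [b] \<in> L} \<subseteq> {b. z @ [b] \<in> L}" using suf by auto
  then show ?thesis unfolding rc_def by (intro card_mono) auto
qed

lemma rc_pos_in: "1 \<le> rc L z \<Longrightarrow> z \<in> L"
proof -
  assume "1 \<le> rc L z"
  then have "{b. z @ [b] \<in> L} \<noteq> {}" unfolding rc_def by (metis card.empty not_one_le_zero)
  then obtain b where "z @ [b] \<in> L" by blast
  then show ?thesis by (rule pre)
qed

lemma rc_ge1: "z \<in> L \<Longrightarrow> 1 \<le> rc L z"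
proof -
  assume "z \<in> L"
  then obtain b where "z @ [b] \<in> L" using rext by blast
  then have "b \<in> {b. z @ [b] \<in> L}" by simp
  then have "card {b. z @ [b] \<in> L} \<noteq> 0" by (metis card_0_eq empty_iff finite)
  then show ?thesis unfolding rc_def by (metis One_nat_def Suc_leI neq0_conv)
qed

lemma two_elems: "2 \<le> rc L z \<Longrightarrow> \<exists>b b'. b \<noteq> b' \<and> z @ [b] \<in> L \<and> z @ [b'] \<in> L"
proof -
  assume "2 \<le> rc L z"
  then obtain S where "S \<subseteq> {b. z @ [b] \<in> L}" "card S = 2"
    unfolding rc_def by (meson obtain_subset_with_card_n)
  then show ?thesis by (auto simp: card_2_iff)
qed

lemma two_elems_rev: "b \<noteq> b' \<Longrightarrow> z @ [b] \<in> L \<Longrightarrow> z @ [b'] \<in> L \<Longrightarrow> 2 \<le> rc L z"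
proof -
  assume a: "b \<noteq> b'" "z @ [b] \<in> L" "z @ [b'] \<in> L"
  have "card {b, b'} \<le> card {b. z @ [b] \<in> L}" using a by (intro card_mono) auto
  then show ?thesis using a(1) unfolding rc_def by simp
qed

lemma rs_ext:
  assumes y: "y \<in> L" "m \<le> length y" and r: "2 \<le> rc L y"
  shows "\<exists>a. 2 \<le> rc L (a # y)"
proof (rule ccontr)
  assume neg: "\<not> ?thesis"
  have uniq: "b1 = b2" if "a # y @ [b1] \<in> L" "a # y @ [b2] \<in> L" for a b1 b2
  proof (rule ccontr)
    assume "b1 \<noteq> b2"
    then have "2 \<le> rc L (a # y)" using two_elems_rev[of b1 b2 "a # y"] that by simp
    with neg show False by blast
  qed
  obtain b b' where bb: "b \<noteq> b'" "y @ [b] \<in> L" "y @ [b'] \<in> L" using two_elems[OF r] by blast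
  have C: "CONN L 1 1 y" by (rule conn1[OF y])
  have inb: "Inr [b] \<in> GV L 1 1 y" "Inr [b'] \<in> GV L 1 1 y" using bb unfolding GV_def RE_def by auto
  have w: "(GA L 1 1 y)\<^sup>*\<^sup>* (Inr [b]) (Inr [b'])" using C inb unfolding CONN_def by blast
  have "\<And>q. (GA L 1 1 y)\<^sup>*\<^sup>* (Inr [b]) q \<Longrightarrow> q = Inr [b] \<or> (\<exists>u. q = Inl u \<and> GA L 1 1 y (Inl u) (Inr [b]))"
  proof -
    fix q assume "(GA L 1 1 y)\<^sup>*\<^sup>* (Inr [b]) q"
    then show "q = Inr [b] \<or> (\<exists>u. q = Inl u \<and> GA L 1 1 y (Inl u) (Inr [b]))"
    proof (induction rule: rtranclp_induct)
      case base then show ?case by simp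
    next
      case (step q q')
      from step.IH show ?case
      proof
        assume "q = Inr [b]"
        then obtain u where "q' = Inl u" "GA L 1 1 y (Inl u) (Inr [b])"
          using step.hyps(2) by (cases q') (auto)
        then show ?thesis by blast
      next
        assume "\<exists>u. q = Inl u \<and> GA L 1 1 y (Inl u) (Inr [b])"
        then obtain u where u: "q = Inl u" "length u = 1" "u @ y @ [b] \<in> L" by auto
        obtain v where v: "q' = Inr v" "length v = 1" "u @ y @ v \<in> L"
          using step.hyps(2) u(1) by (cases q') auto
        obtain a where ua: "u = [a]" using u(2) by (cases u) auto
        obtain c where vc: "v = [c]" using v(2) by (cases v) auto
        have "c = b" using uniq[of a c b] u(3) v(3) ua vc by simp
        then show ?thesis using v(1) vc by simp
      qed
    qed
  qed
  from this[OF w] bb(1) show False by auto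
qed

lemma sum_bound:
  assumes y: "y \<in> L" "m \<le> length y"
  shows "(\<Sum>a\<in>{a. a # y \<in> L}. (rc L (a # y) - 1)) + 1 \<le> rc L y"
proof -
  let ?A = "{a. a # y \<in> L}"
  have eq: "{(a, b). a # y @ [b] \<in> L} = Sigma ?A (\<lambda>a. {b. (a # y) @ [b] \<in> L})"
    using pre by auto
  have "card {(a, b). a # y @ [b] \<in> L} = (\<Sum>a\<in>?A. rc L (a # y))"
    unfolding eq rc_def by (rule card_SigmaI) auto
  moreover have "(\<Sum>a\<in>?A. rc L (a # y)) = (\<Sum>a\<in>?A. (rc L (a # y) - 1)) + card ?A"
  proof -
    have "(\<Sum>a\<in>?A. rc L (a # y)) = (\<Sum>a\<in>?A. ((rc L (a # y) - 1) + 1))"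
    proof (rule sum.cong)
      fix x assume "x \<in> ?A"
      then have "1 \<le> rc L (x # y)" using rc_ge1[of "x # y"] by simp
      then show "rc L (x # y) = rc L (x # y) - 1 + 1" by simp
    qed simp
    also have "\<dots> = (\<Sum>a\<in>?A. (rc L (a # y) - 1)) + card ?A" by (simp only: sum.distrib card_eq_sum)
    finally show ?thesis .
  qed
  ultimately show ?thesis using forest1[OF y] unfolding rc_def by simp
qed

end


context wl begin

definition Ln :: "nat \<Rightarrow> 'a list set" where "Ln N = {y \<in> L. length y = N}"
definition W :: "nat \<Rightarrow> nat" where "W N = (\<Sum>y\<in>Ln N. (rc L y - 1))"
definition RS :: "nat \<Rightarrow> 'a list set" where "RS N = {y \<in> Ln N. 2 \<le> rc L y}"

lemma fin_Ln: "finite (Ln N)"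
  by (rule finite_subset[OF _ finite_len[of N]]) (auto simp: Ln_def)

lemma fin_RS: "finite (RS N)"
  by (rule finite_subset[OF _ fin_Ln[of N]]) (auto simp: RS_def)


lemma Ln_Suc: "Ln (Suc N) = (\<lambda>(y, a). a # y) ` Sigma (Ln N) (\<lambda>y. {a. a # y \<in> L})"
proof
  show "Ln (Suc N) \<subseteq> (\<lambda>(y, a). a # y) ` Sigma (Ln N) (\<lambda>y. {a. a # y \<in> L})"
  proof
    fix z assume z: "z \<in> Ln (Suc N)"
    then obtain a y where zy: "z = a # y" unfolding Ln_def by (cases z) auto
    have "y \<in> L" using z zy suf[of "[a]" y] unfolding Ln_def by simp
    then have ya: "(y, a) \<in> Sigma (Ln N) (\<lambda>y. {a. a # y \<in> L})" using z zy unfolding Ln_def by simp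
    show "z \<in> (\<lambda>(y, a). a # y) ` Sigma (Ln N) (\<lambda>y. {a. a # y \<in> L})"
      by (rule image_eqI[where x="(y, a)", OF _ ya]) (simp add: zy)
  qed
next
  show "(\<lambda>(y, a). a # y) ` Sigma (Ln N) (\<lambda>y. {a. a # y \<in> L}) \<subseteq> Ln (Suc N)"
    unfolding Ln_def by auto
qed


lemma W_step: assumes "m \<le> N" shows "W (Suc N) \<le> W N"
proof -
  have inj: "inj_on (\<lambda>(y, a). a # y) (Sigma (Ln N) (\<lambda>y. {a. a # y \<in> L}))"
    by (auto simp: inj_on_def)
  have "W (Suc N) = (\<Sum>z\<in>Sigma (Ln N) (\<lambda>y. {a. a # y \<in> L}). (rc L ((\<lambda>(y, a). a # y) z) - 1))"
    unfolding W_def Ln_Suc by (rule sum.reindex[OF inj, unfolded comp_def])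
  also have "\<dots> = (\<Sum>(y, a)\<in>Sigma (Ln N) (\<lambda>y. {a. a # y \<in> L}). (rc L (a # y) - 1))"
    by (rule sum.cong) (auto split: prod.splits)
  also have "\<dots> = (\<Sum>y\<in>Ln N. \<Sum>a\<in>{a. a # y \<in> L}. (rc L (a # y) - 1))"
    by (rule sum.Sigma[symmetric]) (auto simp: fin_Ln)
  also have "\<dots> \<le> (\<Sum>y\<in>Ln N. (rc L y - 1))"
  proof (rule sum_mono)
    fix y assume "y \<in> Ln N"
    then have "y \<in> L" "m \<le> length y" using assms unfolding Ln_def by auto
    from sum_bound[OF this] show "(\<Sum>a\<in>{a. a # y \<in> L}. (rc L (a # y) - 1)) \<le> rc L y - 1" by simp
  qed
  finally show ?thesis unfolding W_def .
qed


lemma W_le: "m \<le> N \<Longrightarrow> W N \<le> W m"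
proof (induction N rule: dec_induct)
  case base then show ?case by simp
next
  case (step N) then show ?case using W_step[of N] by simp
qed

lemma RS_le_W: "card (RS N) \<le> W N"
proof -
  have "card (RS N) = (\<Sum>y\<in>RS N. 1)" by simp
  also have "\<dots> \<le> (\<Sum>y\<in>RS N. (rc L y - 1))" by (rule sum_mono) (auto simp: RS_def)
  also have "\<dots> \<le> (\<Sum>y\<in>Ln N. (rc L y - 1))"
    by (rule sum_mono2[OF fin_Ln]) (auto simp: RS_def)
  finally show ?thesis unfolding W_def .
qed


lemma tl_RS: "tl ` RS (Suc N) \<subseteq> RS N"
proof
  fix y assume "y \<in> tl ` RS (Suc N)"
  then obtain z where z: "z \<in> RS (Suc N)" "y = tl z" by blast
  have "length z = Suc N" using z(1) unfolding RS_def Ln_def by simp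
  then obtain a y' where "z = a # y'" by (cases z) auto
  then have za: "z = a # y" using z(2) by simp
  have zz: "a # y \<in> RS (Suc N)" using z(1) za by simp
  have "2 \<le> rc L (a # y)" using zz unfolding RS_def by simp
  then have "2 \<le> rc L y" using rc_suffix[of "[a]" y] by simp
  moreover have "y \<in> L" using zz suf[of "[a]" y] unfolding RS_def Ln_def by simp
  ultimately show "y \<in> RS N" using zz unfolding RS_def Ln_def by simp
qed


lemma RS_tl: assumes "m \<le> N" shows "RS N \<subseteq> tl ` RS (Suc N)"
proof
  fix y assume y: "y \<in> RS N"
  then have "y \<in> L" "m \<le> length y" "2 \<le> rc L y" using assms unfolding RS_def Ln_def by auto
  then obtain a where a: "2 \<le> rc L (a # y)" using rs_ext by blast
  then have "a # y \<in> L" using rc_pos_in[of "a # y"] by simp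
  then have "a # y \<in> RS (Suc N)" using a y unfolding RS_def Ln_def by simp
  then show "y \<in> tl ` RS (Suc N)" by force
qed

lemma RS_mono: assumes "m \<le> N" shows "card (RS N) \<le> card (RS (Suc N))"
proof -
  have "card (RS N) \<le> card (tl ` RS (Suc N))" by (rule card_mono) (use RS_tl[OF assms] fin_RS in auto)
  also have "\<dots> \<le> card (RS (Suc N))" by (rule card_image_le[OF fin_RS])
  finally show ?thesis .
qed

lemma RS_mono': assumes "m \<le> N0" "N0 \<le> N" shows "card (RS N0) \<le> card (RS N)"
  using assms(2)
proof (induction N rule: dec_induct)
  case base then show ?case by simp
next
  case (step N) then show ?case using RS_mono[of N] assms(1) by simp
qed

definition good :: "nat \<Rightarrow> bool" where
  "good N0 = (m \<le> N0 \<and> (\<forall>y a a'. N0 \<le> length y \<longrightarrow> 2 \<le> rc L (a # y) \<longrightarrow> 2 \<le> rc L (a' # y) \<longrightarrow> a = a'))"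

lemma exists_good: "\<exists>N0. good N0"
proof -
  have "\<forall>N. m \<le> N \<longrightarrow> card (RS N) < Suc (W m)"
    using RS_le_W W_le by (metis le_imp_less_Suc le_trans)
  then obtain N0 where N0: "m \<le> N0" "\<And>N. m \<le> N \<Longrightarrow> card (RS N) \<le> card (RS N0)"
    using ex_has_greatest_nat[where P="\<lambda>N. m \<le> N" and f="\<lambda>N. card (RS N)" and k=m and b="Suc (W m)"]
    by blast
  have "a = a'" if y: "N0 \<le> length y" "2 \<le> rc L (a # y)" "2 \<le> rc L (a' # y)" for y a a'
  proof (rule ccontr)
    assume ne: "a \<noteq> a'"
    define N where "N = length y"
    have in1: "a # y \<in> RS (Suc N)" "a' # y \<in> RS (Suc N)"
      using y rc_pos_in[of "a # y"] rc_pos_in[of "a' # y"] unfolding RS_def Ln_def N_def by auto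
    have mN: "m \<le> N" using N0(1) y(1) unfolding N_def by simp
    have img: "tl ` RS (Suc N) = RS N" using tl_RS RS_tl[OF mN] by blast
    have "\<not> inj_on tl (RS (Suc N))"
    proof
      assume "inj_on tl (RS (Suc N))"
      moreover have "tl (a # y) = tl (a' # y)" by simp
      ultimately have "a # y = a' # y" using in1 inj_onD by metis
      with ne show False by simp
    qed
    then have "card (tl ` RS (Suc N)) \<noteq> card (RS (Suc N))" using eq_card_imp_inj_on[OF fin_RS] by blast
    then have "card (RS N) < card (RS (Suc N))" using img card_image_le[OF fin_RS, of tl "Suc N"] by simp
    moreover have "card (RS (Suc N)) \<le> card (RS N0)" using N0(2) mN by simp
    moreover have "card (RS N0) \<le> card (RS N)" using RS_mono'[OF N0(1)] y(1) unfolding N_def by simp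
    ultimately show False by simp
  qed
  then show ?thesis using N0(1) unfolding good_def by blast
qed

end


definition nxt :: "'a list set \<Rightarrow> 'a list \<Rightarrow> 'a" where
  "nxt L y = (SOME a. 2 \<le> rc L (a # y))"

primrec Ext :: "'a list set \<Rightarrow> nat \<Rightarrow> 'a list \<Rightarrow> 'a list" where
  "Ext L 0 y = y"
| "Ext L (Suc s) y = nxt L (Ext L s y) # Ext L s y"

definition Lam :: "'a list set \<Rightarrow> 'a list \<Rightarrow> nat \<Rightarrow> 'a" where
  "Lam L z t = rev (Ext L (Suc t) z) ! t"

lemma length_Ext [simp]: "length (Ext L s y) = length y + s"
  by (induction s) auto

lemma Ext_add: "Ext L (a + b) y = Ext L a (Ext L b y)"
  by (induction a) auto

lemma Ext_suffix: "\<exists>p. Ext L (s + d) y = p @ Ext L s y"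
proof (induction d)
  case 0 then show ?case by simp
next
  case (Suc d)
  then obtain p where "Ext L (s + d) y = p @ Ext L s y" by blast
  then have "Ext L (s + Suc d) y = (nxt L (Ext L (s + d) y) # p) @ Ext L s y" by simp
  then show ?case by blast
qed

lemma rev_Ext_gen: "t < length (Ext L s z) \<Longrightarrow> rev (Ext L s z) ! t = rev (Ext L (s + d) z) ! t"
proof -
  assume t: "t < length (Ext L s z)"
  obtain p where p: "Ext L (s + d) z = p @ Ext L s z" using Ext_suffix by blast
  show ?thesis unfolding p using t by (simp add: nth_append)
qed

lemma rev_Ext: assumes "t < length z + s" shows "rev (Ext L s z) ! t = Lam L z t"
proof -
  have "rev (Ext L s z) ! t = rev (Ext L (s + Suc t) z) ! t"
    by (rule rev_Ext_gen) (use assms in simp)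
  also have "\<dots> = rev (Ext L (Suc t + s) z) ! t" by (simp add: add.commute)
  also have "\<dots> = rev (Ext L (Suc t) z) ! t"
    by (rule rev_Ext_gen[symmetric]) simp
  finally show ?thesis unfolding Lam_def .
qed

context wl begin

lemma Ext_rs:
  assumes g: "good N0" and y: "N0 \<le> length y" "2 \<le> rc L y"
  shows "2 \<le> rc L (Ext L s y)"
proof (induction s)
  case 0 then show ?case using y by simp
next
  case (Suc s)
  let ?z = "Ext L s y"
  have "?z \<in> L" using Suc rc_pos_in[of ?z] by simp
  moreover have "m \<le> length ?z" using g y unfolding good_def by simp
  ultimately have "\<exists>a. 2 \<le> rc L (a # ?z)" using rs_ext Suc by blast
  then have "2 \<le> rc L (nxt L ?z # ?z)" unfolding nxt_def by (rule someI_ex)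
  then show ?case by simp
qed

lemma Ext_unique:
  assumes g: "good N0" and y: "N0 \<le> length y" "2 \<le> rc L y"
  shows "2 \<le> rc L (u @ y) \<Longrightarrow> u @ y = Ext L (length u) y"
proof (induction u)
  case Nil then show ?case by simp
next
  case (Cons a u)
  have "2 \<le> rc L (u @ y)" using Cons.prems rc_suffix[of "[a]" "u @ y"] by simp
  then have E: "u @ y = Ext L (length u) y" by (rule Cons.IH)
  have r1: "2 \<le> rc L (a # (u @ y))" using Cons.prems by simp
  have "2 \<le> rc L (Ext L (Suc (length u)) y)" by (rule Ext_rs[OF g y])
  then have r2: "2 \<le> rc L (nxt L (u @ y) # (u @ y))" using E by simp
  have "N0 \<le> length (u @ y)" using y by simp
  then have "a = nxt L (u @ y)" using g r1 r2 unfolding good_def by blast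
  then show ?case using E by simp
qed

lemma host:
  assumes g: "good N0" and w: "N0 \<le> length w" and u: "length u = k"
    and r: "2 \<le> rc L (u @ w @ x)"
  shows "\<exists>z. z \<in> RS N0 \<and> (\<forall>t<length w. rev w ! t = Lam L z (length x + t))
           \<and> (\<forall>t<k. rev u ! t = Lam L z (length x + length w + t))"
proof -
  define y where "y = w @ x"
  define s where "s = length y - N0"
  define z where "z = drop s y"
  have ly: "length y = length w + length x" unfolding y_def by simp
  have lz: "length z = N0" using w ly unfolding z_def s_def by simp
  have ry: "2 \<le> rc L y" using r rc_suffix[of u y] unfolding y_def by simp
  have yz: "y = take s y @ z" unfolding z_def by simp
  have rz: "2 \<le> rc L z" using ry rc_suffix[of "take s y" z] yz by simp
  have zRS: "z \<in> RS N0" using rz lz rc_pos_in[of z] unfolding RS_def Ln_def by simp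
  have lt: "length (take s y) = s" using w ly unfolding s_def by simp
  have "take s y @ z = Ext L (length (take s y)) z"
    by (rule Ext_unique[OF g _ rz]) (use lz ry yz in simp_all)
  then have yE: "y = Ext L s z" using yz lt by simp
  have "u @ y = Ext L (length u) y"
    by (rule Ext_unique[OF g _ ry]) (use w ly r y_def in simp_all)
  then have uyE: "u @ y = Ext L (k + s) z" using u yE by (simp add: Ext_add)
  have A: "rev w ! t = Lam L z (length x + t)" if t: "t < length w" for t
  proof -
    have "rev y = rev x @ rev w" unfolding y_def by simp
    then have "rev w ! t = rev y ! (length x + t)" by (simp add: nth_append)
    also have "\<dots> = Lam L z (length x + t)" unfolding yE
      by (rule rev_Ext) (use t lz ly w in \<open>simp add: s_def\<close>)
    finally show ?thesis .
  qed
  have B: "rev u ! t = Lam L z (length x + length w + t)" if t: "t < k" for t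
  proof -
    have "rev (u @ y) = rev y @ rev u" by simp
    then have "rev u ! t = rev (u @ y) ! (length y + t)" by (simp add: nth_append)
    also have "\<dots> = Lam L z (length y + t)" unfolding uyE
      by (rule rev_Ext) (use t lz ly w in \<open>simp add: s_def\<close>)
    finally show ?thesis using ly by (simp add: add.commute add.left_commute)
  qed
  show ?thesis using zRS A B by blast
qed

lemma uniq_left_core:
  assumes g: "good N0"
  shows "\<exists>n. \<forall>w u u' x x'. n \<le> length w \<longrightarrow> length u = k \<longrightarrow> length u' = k \<longrightarrow>
     length x < k \<longrightarrow> length x' < k \<longrightarrow> 2 \<le> rc L (u @ w @ x) \<longrightarrow> 2 \<le> rc L (u' @ w @ x') \<longrightarrow> u = u'"
proof -
  define mu where "mu = (\<lambda>z j t. Lam L z (j + t))"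
  define Q where "Q = RS N0 \<times> {..<k}"
  have finQ: "finite Q" unfolding Q_def using fin_RS by simp
  define dd where "dd = (\<lambda>(P, P'). if mu (fst P) (snd P) = mu (fst P') (snd P') then 0
                          else (SOME t. mu (fst P) (snd P) t \<noteq> mu (fst P') (snd P') t))"
  define D where "D = insert 0 (dd ` (Q \<times> Q))"
  have finD: "finite D" unfolding D_def using finQ by simp
  define n where "n = max N0 (Suc (Max D))"
  have "u = u'" if w: "n \<le> length w" and u: "length u = k" "length u' = k"
    and x: "length x < k" "length x' < k" and r: "2 \<le> rc L (u @ w @ x)" "2 \<le> rc L (u' @ w @ x')"
    for w u u' x x'
  proof -
    have wN: "N0 \<le> length w" using w unfolding n_def by simp
    obtain z where z: "z \<in> RS N0" "\<forall>t<length w. rev w ! t = Lam L z (length x + t)"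
      "\<forall>t<k. rev u ! t = Lam L z (length x + length w + t)"
      using host[OF g wN u(1) r(1)] by blast
    obtain z' where z': "z' \<in> RS N0" "\<forall>t<length w. rev w ! t = Lam L z' (length x' + t)"
      "\<forall>t<k. rev u' ! t = Lam L z' (length x' + length w + t)"
      using host[OF g wN u(2) r(2)] by blast
    have PQ: "((z, length x), (z', length x')) \<in> Q \<times> Q" unfolding Q_def using z(1) z'(1) x by simp
    have eqmu: "mu z (length x) = mu z' (length x')"
    proof (rule ccontr)
      assume ne: "mu z (length x) \<noteq> mu z' (length x')"
      define t0 where "t0 = (SOME t. mu z (length x) t \<noteq> mu z' (length x') t)"
      have t0: "mu z (length x) t0 \<noteq> mu z' (length x') t0"
        unfolding t0_def by (rule someI_ex) (use ne in blast)
      have "dd ((z, length x), (z', length x')) = t0" unfolding dd_def t0_def using ne by simp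
      then have "t0 \<in> D" unfolding D_def using PQ by force
      then have "t0 \<le> Max D" using finD by simp
      then have "t0 < length w" using w unfolding n_def by simp
      then have "mu z (length x) t0 = mu z' (length x') t0"
        using z(2) z'(2) unfolding mu_def by simp
      with t0 show False by simp
    qed
    have "rev u ! t = rev u' ! t" if "t < k" for t
    proof -
      have "rev u ! t = mu z (length x) (length w + t)" using z(3) that unfolding mu_def
        by (simp add: add.assoc)
      also have "\<dots> = mu z' (length x') (length w + t)" using eqmu by simp
      also have "\<dots> = rev u' ! t" using z'(3) that unfolding mu_def by (simp add: add.assoc)
      finally show ?thesis .
    qed
    then have "rev u = rev u'" using u by (intro nth_equalityI) auto
    then show ?thesis by simp
  qed
  then show ?thesis by blast
qed

end


context wl begin

lemma lext_n: "y \<in> L \<Longrightarrow> \<exists>u. length u = a \<and> u @ y \<in> L"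
proof (induction a)
  case 0 then show ?case by simp
next
  case (Suc a)
  then obtain u where u: "length u = a" "u @ y \<in> L" by blast
  then obtain b where "b # u @ y \<in> L" using lext by blast
  then show ?case using u by (intro exI[of _ "b # u"]) simp
qed

lemma GA_in: assumes "GA L a c y p q" shows "q \<in> GV L a c y"
proof (cases p; cases q)
  fix u v assume "p = Inl u" "q = Inr v"
  then have "length v = c" "(u @ y) @ v \<in> L" using assms by auto
  then have "y @ v \<in> L" using suf[of u "y @ v"] by simp
  then show ?thesis using \<open>length v = c\<close> \<open>q = Inr v\<close> unfolding GV_def RE_def by auto
next
  fix u v assume "p = Inr v" "q = Inl u"
  then have "length u = a" "(u @ y) @ v \<in> L" using assms by auto
  then have "u @ y \<in> L" using pre[of "u @ y" v] by simp
  then show ?thesis using \<open>length u = a\<close> \<open>q = Inl u\<close> unfolding GV_def LE_def by auto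
qed (use assms in auto)

lemma GA_in1: "GA L a c y p q \<Longrightarrow> p \<in> GV L a c y"
  using GA_in GA_sym by metis

lemma conn_right:
  assumes H: "\<And>y. y \<in> L \<Longrightarrow> m \<le> length y \<Longrightarrow> CONN L a c y"
    and H1: "\<And>y. y \<in> L \<Longrightarrow> m \<le> length y \<Longrightarrow> CONN L a 1 y"
    and y: "y \<in> L" "m \<le> length y"
  shows "CONN L a (Suc c) y"
proof -
  let ?G = "GA L a c y" and ?G' = "GA L a (Suc c) y"
  have claim1: "(\<forall>u. q = Inl u \<longrightarrow> ?G'\<^sup>*\<^sup>* (Inl u0) (Inl u)) \<and>
                (\<forall>v. q = Inr v \<longrightarrow> (\<exists>u. ?G (Inl u) (Inr v) \<and> ?G'\<^sup>*\<^sup>* (Inl u0) (Inl u)))"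
    if "?G\<^sup>*\<^sup>* (Inl u0) q" for u0 q
    using that
  proof (induction rule: rtranclp_induct)
    case base then show ?case by simp
  next
    case (step q q')
    show ?case
    proof (cases q)
      case (Inl u)
      then obtain v where v: "q' = Inr v" using step.hyps(2) by (cases q') auto
      have "?G'\<^sup>*\<^sup>* (Inl u0) (Inl u)" using step.IH Inl by simp
      then show ?thesis using v Inl step.hyps(2) by blast
    next
      case (Inr v)
      then obtain u' where u': "q' = Inl u'" using step.hyps(2) by (cases q') auto
      obtain u where u: "?G (Inl u) (Inr v)" "?G'\<^sup>*\<^sup>* (Inl u0) (Inl u)" using step.IH Inr by blast
      have e1: "length u = a" "length v = c" "u @ y @ v \<in> L" using u(1) by auto
      have e2: "length u' = a" "u' @ y @ v \<in> L" using step.hyps(2) Inr u' by auto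
      have yv: "y @ v \<in> L" using e1(3) fact[of u "y @ v" "[]"] by simp
      have C: "CONN L a 1 (y @ v)" by (rule H1[OF yv]) (use y in simp)
      have inV: "Inl u \<in> GV L a 1 (y @ v)" "Inl u' \<in> GV L a 1 (y @ v)"
        using e1 e2 unfolding GV_def LE_def by auto
      have w: "(GA L a 1 (y @ v))\<^sup>*\<^sup>* (Inl u) (Inl u')" using C inV unfolding CONN_def by blast
      define f :: "'a list + 'a list \<Rightarrow> 'a list + 'a list"
        where "f = (\<lambda>p. case p of Inl x \<Rightarrow> Inl x | Inr z \<Rightarrow> Inr (v @ z))"
      have lift: "?G' (f p) (f q)" if "GA L a 1 (y @ v) p q" for p q
        using that e1(2) by (cases p; cases q) (auto simp: f_def)
      have "?G'\<^sup>*\<^sup>* (f (Inl u)) (f (Inl u'))" by (rule rtranclp_map[where f=f and R="GA L a 1 (y @ v)" and R'="?G'", OF lift w])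
      then have "?G'\<^sup>*\<^sup>* (Inl u) (Inl u')" by (simp add: f_def)
      then have "?G'\<^sup>*\<^sup>* (Inl u0) (Inl u')" using u(2) by simp
      then show ?thesis using u' by simp
    qed
  qed
  have anchor: "\<exists>u\<in>LE L a y. ?G'\<^sup>*\<^sup>* p (Inl u)" if p: "p \<in> GV L a (Suc c) y" for p
  proof (cases p)
    case (Inl u)
    then show ?thesis using p unfolding GV_def by auto
  next
    case (Inr v)
    then have v: "length v = Suc c" "y @ v \<in> L" using p unfolding GV_def RE_def by auto
    obtain u where u: "length u = a" "u @ y @ v \<in> L" using lext_n[OF v(2)] by auto
    have "?G' (Inl u) (Inr v)" using u v by simp
    then have "?G'\<^sup>*\<^sup>* (Inr v) (Inl u)" using GA_sym by blast
    moreover have "u \<in> LE L a y" using u pre[of "u @ y" v] unfolding LE_def by simp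
    ultimately show ?thesis using Inr by blast
  qed
  show ?thesis unfolding CONN_def
  proof (intro ballI)
    fix p q assume p: "p \<in> GV L a (Suc c) y" and q: "q \<in> GV L a (Suc c) y"
    obtain up where up: "up \<in> LE L a y" "?G'\<^sup>*\<^sup>* p (Inl up)" using anchor[OF p] by blast
    obtain uq where uq: "uq \<in> LE L a y" "?G'\<^sup>*\<^sup>* q (Inl uq)" using anchor[OF q] by blast
    have "Inl up \<in> GV L a c y" "Inl uq \<in> GV L a c y" using up uq unfolding GV_def by auto
    then have "?G\<^sup>*\<^sup>* (Inl up) (Inl uq)" using H[OF y] unfolding CONN_def by blast
    then have m: "?G'\<^sup>*\<^sup>* (Inl up) (Inl uq)" using claim1 by blast
    have sG: "\<And>x z. ?G' x z \<Longrightarrow> ?G' z x" by (rule GA_sym)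
    have "?G'\<^sup>*\<^sup>* (Inl uq) q" by (rule rtranclp_sym[where R="?G'", OF sG uq(2)])
    then show "?G'\<^sup>*\<^sup>* p q" using up(2) m by (meson rtranclp_trans)
  qed
qed

lemma conn_1c: "1 \<le> c \<Longrightarrow> y \<in> L \<Longrightarrow> m \<le> length y \<Longrightarrow> CONN L 1 c y"
proof (induction c arbitrary: y rule: dec_induct)
  case base then show ?case using conn1 by simp
next
  case (step c)
  then show ?case using conn_right[of 1 c] conn1 by blast
qed

end

lemma rev_mem: "x \<in> rev ` L \<longleftrightarrow> rev x \<in> L"
  by (metis image_iff rev_rev_ident)

lemma CONN_rev:
  assumes "CONN L a c y" shows "CONN (rev ` L) c a (rev y)"
proof -
  define f :: "'a list + 'a list \<Rightarrow> 'a list + 'a list" where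
    "f = (\<lambda>p. case p of Inl u \<Rightarrow> Inr (rev u) | Inr v \<Rightarrow> Inl (rev v))"
  have lift: "GA (rev ` L) c a (rev y) (f p) (f q)" if "GA L a c y p q" for p q
    using that by (cases p; cases q) (auto simp: f_def rev_mem)
  have pre: "\<exists>p0\<in>GV L a c y. p = f p0" if "p \<in> GV (rev ` L) c a (rev y)" for p
  proof (cases p)
    case (Inl u)
    then have "Inr (rev u) \<in> GV L a c y" using that unfolding GV_def LE_def RE_def by (auto simp: rev_mem)
    then show ?thesis using Inl by (intro bexI[of _ "Inr (rev u)"]) (simp_all add: f_def)
  next
    case (Inr v)
    then have "Inl (rev v) \<in> GV L a c y" using that unfolding GV_def LE_def RE_def by (auto simp: rev_mem)
    then show ?thesis using Inr by (intro bexI[of _ "Inl (rev v)"]) (simp_all add: f_def)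
  qed
  show ?thesis unfolding CONN_def
  proof (intro ballI)
    fix p q assume "p \<in> GV (rev ` L) c a (rev y)" "q \<in> GV (rev ` L) c a (rev y)"
    then obtain p0 q0 where "p0 \<in> GV L a c y" "q0 \<in> GV L a c y" "p = f p0" "q = f q0"
      using pre by metis
    then have "(GA L a c y)\<^sup>*\<^sup>* p0 q0" using assms unfolding CONN_def by blast
    then have "(GA (rev ` L) c a (rev y))\<^sup>*\<^sup>* (f p0) (f q0)"
      using rtranclp_map[where f=f and R="GA L a c y" and R'="GA (rev ` L) c a (rev y)", OF lift] by blast
    then show "(GA (rev ` L) c a (rev y))\<^sup>*\<^sup>* p q" using \<open>p = f p0\<close> \<open>q = f q0\<close> by simp
  qed
qed

lemma wl_rev: assumes "wl L m" shows "wl (rev ` L) m"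
proof -
  interpret wl L m by (rule assms)
  show ?thesis
  proof
    fix u v w assume "u @ v @ w \<in> rev ` L"
    then have "rev w @ rev v @ rev u \<in> L" by (simp add: rev_mem)
    then show "v \<in> rev ` L" using fact by (simp add: rev_mem)
  next
    fix y :: "'a list" assume "y \<in> rev ` L"
    then obtain b where "rev y @ [b] \<in> L" using rext by (auto simp: rev_mem)
    then show "\<exists>a. a # y \<in> rev ` L" by (auto simp: rev_mem)
  next
    fix y :: "'a list" assume "y \<in> rev ` L"
    then obtain b where "b # rev y \<in> L" using lext by (auto simp: rev_mem)
    then show "\<exists>b. y @ [b] \<in> rev ` L" by (auto simp: rev_mem)
  next
    fix y :: "'a list" assume y: "y \<in> rev ` L" "m \<le> length y"
    then have "CONN L 1 1 (rev y)" using conn1 by (simp add: rev_mem)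
    then show "CONN (rev ` L) 1 1 y" using CONN_rev by fastforce
  next
    fix y :: "'a list" assume y: "y \<in> rev ` L" "m \<le> length y"
    then have F: "card {(a, b). a # rev y @ [b] \<in> L} + 1 \<le> card {a. a # rev y \<in> L} + card {b. rev y @ [b] \<in> L}"
      using forest1 by (simp add: rev_mem)
    have e1: "{(a, b). a # y @ [b] \<in> rev ` L} = (\<lambda>(a, b). (b, a)) ` {(a, b). a # rev y @ [b] \<in> L}"
      by (auto simp: rev_mem)
    have "card {(a, b). a # y @ [b] \<in> rev ` L} = card {(a, b). a # rev y @ [b] \<in> L}"
      unfolding e1 by (rule card_image) (auto simp: inj_on_def)
    moreover have "{a. a # y \<in> rev ` L} = {b. rev y @ [b] \<in> L}" by (auto simp: rev_mem)
    moreover have "{b. y @ [b] \<in> rev ` L} = {a. a # rev y \<in> L}" by (auto simp: rev_mem)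
    ultimately show "card {(a, b). a # y @ [b] \<in> rev ` L} + 1 \<le> card {a. a # y \<in> rev ` L} + card {b. y @ [b] \<in> rev ` L}"
      using F by simp
  qed
qed


definition NLU :: "'a list set \<Rightarrow> nat \<Rightarrow> 'a list \<Rightarrow> bool" where
  "NLU L k w = (\<forall>u u' v1 v2 v1' v2'. length u = k \<longrightarrow> length u' = k \<longrightarrow> length v1 = k \<longrightarrow>
     length v2 = k \<longrightarrow> length v1' = k \<longrightarrow> length v2' = k \<longrightarrow> v1 \<noteq> v2 \<longrightarrow> v1' \<noteq> v2' \<longrightarrow>
     u @ w @ v1 \<in> L \<longrightarrow> u @ w @ v2 \<in> L \<longrightarrow> u' @ w @ v1' \<in> L \<longrightarrow> u' @ w @ v2' \<in> L \<longrightarrow> u = u')"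

definition NRU :: "'a list set \<Rightarrow> nat \<Rightarrow> 'a list \<Rightarrow> bool" where
  "NRU L k w = (\<forall>v v' u1 u2 u1' u2'. length v = k \<longrightarrow> length v' = k \<longrightarrow> length u1 = k \<longrightarrow>
     length u2 = k \<longrightarrow> length u1' = k \<longrightarrow> length u2' = k \<longrightarrow> u1 \<noteq> u2 \<longrightarrow> u1' \<noteq> u2' \<longrightarrow>
     u1 @ w @ v \<in> L \<longrightarrow> u2 @ w @ v \<in> L \<longrightarrow> u1' @ w @ v' \<in> L \<longrightarrow> u2' @ w @ v' \<in> L \<longrightarrow> v = v')"

lemma NRU_rev: assumes "NLU (rev ` L) k (rev w)" shows "NRU L k w"
  unfolding NRU_def
proof (intro allI impI)
  fix v v' u1 u2 u1' u2' :: "'a list"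
  assume a: "length v = k" "length v' = k" "length u1 = k" "length u2 = k" "length u1' = k" "length u2' = k"
    "u1 \<noteq> u2" "u1' \<noteq> u2'" "u1 @ w @ v \<in> L" "u2 @ w @ v \<in> L" "u1' @ w @ v' \<in> L" "u2' @ w @ v' \<in> L"
  have "rev v = rev v'"
    using assms[unfolded NLU_def, rule_format, of "rev v" "rev v'" "rev u1" "rev u2" "rev u1'" "rev u2'"] a
    by (simp add: rev_mem)
  then show "v = v'" by simp
qed

lemma diff_pos:
  assumes "length v1 = k" "length v2 = k" "v1 \<noteq> v2"
  shows "\<exists>j<k. take j v1 = take j v2 \<and> v1 ! j \<noteq> v2 ! j"
proof -
  have ex: "\<exists>i. i < k \<and> v1 ! i \<noteq> v2 ! i"
  proof (rule ccontr)
    assume "\<not> ?thesis"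
    then have "v1 = v2" using assms(1,2) by (intro nth_equalityI) auto
    with assms(3) show False by simp
  qed
  define j where "j = (LEAST i. i < k \<and> v1 ! i \<noteq> v2 ! i)"
  have j: "j < k" "v1 ! j \<noteq> v2 ! j" using LeastI_ex[OF ex] unfolding j_def by auto
  have "\<forall>i<j. v1 ! i = v2 ! i"
  proof (intro allI impI)
    fix i assume "i < j"
    then have "\<not> (i < k \<and> v1 ! i \<noteq> v2 ! i)" unfolding j_def by (rule not_less_Least)
    then show "v1 ! i = v2 ! i" using \<open>i < j\<close> j(1) by simp
  qed
  then have "take j v1 = take j v2" using j(1) assms(1,2) by (intro nth_equalityI) auto
  then show ?thesis using j by blast
qed

context wl begin

lemma branch_rs:
  assumes "length v1 = k" "length v2 = k" "v1 \<noteq> v2" "u @ w @ v1 \<in> L" "u @ w @ v2 \<in> L"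
  shows "\<exists>x. length x < k \<and> 2 \<le> rc L (u @ w @ x)"
proof -
  obtain j where j: "j < k" "take j v1 = take j v2" "v1 ! j \<noteq> v2 ! j" using diff_pos[OF assms(1-3)] by blast
  define x where "x = take j v1"
  have h1: "(u @ w @ x) @ [v1 ! j] \<in> L"
  proof -
    have "take (Suc j) v1 = take j v1 @ [v1 ! j]" using j(1) assms(1) by (simp add: take_Suc_conv_app_nth)
    then have "u @ w @ v1 = ((u @ w @ x) @ [v1 ! j]) @ drop (Suc j) v1"
      unfolding x_def by (metis append.assoc append_take_drop_id)
    then show ?thesis using assms(4) pre by metis
  qed
  have h2: "(u @ w @ x) @ [v2 ! j] \<in> L"
  proof -
    have "take (Suc j) v2 = take j v2 @ [v2 ! j]" using j(1) assms(2) by (simp add: take_Suc_conv_app_nth)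
    then have "u @ w @ v2 = ((u @ w @ x) @ [v2 ! j]) @ drop (Suc j) v2"
      unfolding x_def using j(2) by (metis append.assoc append_take_drop_id)
    then show ?thesis using assms(5) pre by metis
  qed
  have "2 \<le> rc L (u @ w @ x)" by (rule two_elems_rev[OF j(3) h1 h2])
  moreover have "length x < k" unfolding x_def using j(1) by simp
  ultimately show ?thesis by blast
qed

lemma NLU_ev: "\<exists>n. \<forall>w. n \<le> length w \<longrightarrow> NLU L k w"
proof -
  obtain N0 where g: "good N0" using exists_good by blast
  obtain n where n: "\<And>w u u' x x'. n \<le> length w \<Longrightarrow> length u = k \<Longrightarrow> length u' = k \<Longrightarrow>
     length x < k \<Longrightarrow> length x' < k \<Longrightarrow> 2 \<le> rc L (u @ w @ x) \<Longrightarrow> 2 \<le> rc L (u' @ w @ x') \<Longrightarrow> u = u'"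
    using uniq_left_core[OF g, of k] by blast
  have "NLU L k w" if "n \<le> length w" for w
    unfolding NLU_def
  proof (intro allI impI)
    fix u u' v1 v2 v1' v2' :: "'a list"
    assume a: "length u = k" "length u' = k" "length v1 = k" "length v2 = k" "length v1' = k"
      "length v2' = k" "v1 \<noteq> v2" "v1' \<noteq> v2'" "u @ w @ v1 \<in> L" "u @ w @ v2 \<in> L"
      "u' @ w @ v1' \<in> L" "u' @ w @ v2' \<in> L"
    obtain x where x: "length x < k" "2 \<le> rc L (u @ w @ x)" using branch_rs[OF a(3,4,7,9,10)] by blast
    obtain x' where x': "length x' < k" "2 \<le> rc L (u' @ w @ x')" using branch_rs[OF a(5,6,8,11,12)] by blast
    show "u = u'" by (rule n[OF that a(1,2) x(1) x'(1) x(2) x'(2)])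
  qed
  then show ?thesis by blast
qed

lemma rev_rev_L: "rev ` rev ` L = L"
  by (simp add: image_image)

lemma conn_all:
  assumes "1 \<le> a" "1 \<le> c" shows "y \<in> L \<Longrightarrow> m \<le> length y \<Longrightarrow> CONN L a c y"
proof -
  interpret M: wl "rev ` L" m by (rule wl_rev[OF wl_axioms])
  have H1: "CONN L a 1 y" if "y \<in> L" "m \<le> length y" for y
  proof -
    have "CONN (rev ` L) 1 a (rev y)" by (rule M.conn_1c) (use assms that in \<open>simp_all add: rev_mem\<close>)
    then have "CONN (rev ` rev ` L) a 1 (rev (rev y))" by (rule CONN_rev)
    then show ?thesis by (simp add: rev_rev_L)
  qed
  show "y \<in> L \<Longrightarrow> m \<le> length y \<Longrightarrow> CONN L a c y"
    using assms(2)
  proof (induction c arbitrary: y rule: dec_induct)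
    case base then show ?case using H1 by simp
  next
    case (step c)
    then show ?case using conn_right[of a c] H1 by blast
  qed
qed

lemma main_abs:
  assumes "1 \<le> k"
  shows "\<exists>n. \<forall>w\<in>L. n \<le> length w \<longrightarrow> CONN L k k w \<and> NLU L k w \<and> NRU L k w"
proof -
  interpret M: wl "rev ` L" m by (rule wl_rev[OF wl_axioms])
  obtain n1 where n1: "\<And>w. n1 \<le> length w \<Longrightarrow> NLU L k w" using NLU_ev by blast
  obtain n2 where n2: "\<And>w. n2 \<le> length w \<Longrightarrow> NLU (rev ` L) k w" using M.NLU_ev by blast
  have "CONN L k k w \<and> NLU L k w \<and> NRU L k w" if "w \<in> L" "max m (max n1 n2) \<le> length w" for w
  proof (intro conjI)
    show "CONN L k k w" by (rule conn_all) (use assms that in simp_all)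
    show "NLU L k w" by (rule n1) (use that in simp)
    show "NRU L k w" by (rule NRU_rev, rule n2) (use that in simp)
  qed
  then show ?thesis by blast
qed

end


lemma simple_tree_crit:
  assumes sym: "\<And>x y. E x y \<Longrightarrow> E y x" and inV: "\<And>x y. E x y \<Longrightarrow> y \<in> V"
    and sd: "\<And>x y. E x y \<Longrightarrow> side x \<noteq> (side y :: bool)"
    and ne: "V \<noteq> {}" and conn: "\<And>p q. p \<in> V \<Longrightarrow> q \<in> V \<Longrightarrow> E\<^sup>*\<^sup>* p q"
    and uq: "\<And>x y a b a' b'. E x a \<Longrightarrow> E x b \<Longrightarrow> a \<noteq> b \<Longrightarrow> E y a' \<Longrightarrow> E y b' \<Longrightarrow> a' \<noteq> b'
              \<Longrightarrow> side x = side y \<Longrightarrow> x = y"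
  shows "is_simple_tree V E"
proof -
  have cg: "connected_graph V E"
    unfolding connected_graph_def
  proof (intro conjI ballI)
    fix a b assume "a \<in> V" "b \<in> V"
    have inV': "\<And>x y. E x y \<Longrightarrow> y \<in> V" by (rule inV)
    show "\<exists>ps. is_path V E ps \<and> hd ps = a \<and> last ps = b"
      by (rule walk_to_path[OF conn[OF \<open>a \<in> V\<close> \<open>b \<in> V\<close>] \<open>a \<in> V\<close> inV'])
  qed (rule ne)
  have pathfacts: "distinct ps \<and> (\<forall>i. Suc i < length ps \<longrightarrow> E (ps ! i) (ps ! Suc i))"
    if "is_path V E ps" for ps using that unfolding is_path_def by blast
  have dist: "ps ! i \<noteq> ps ! j" if "distinct ps" "i < length ps" "j < length ps" "i \<noteq> j" for ps i j
    using that by (simp add: nth_eq_iff_index_eq)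
  have nc: "\<not> has_cycle V E"
  proof
    assume "has_cycle V E"
    then obtain ps where ps: "is_path V E ps" "3 \<le> length ps" "E (last ps) (hd ps)"
      unfolding has_cycle_def by blast
    have d: "distinct ps" and e: "\<And>i. Suc i < length ps \<Longrightarrow> E (ps ! i) (ps ! Suc i)"
      using pathfacts[OF ps(1)] by auto
    have e01: "E (ps ! 0) (ps ! 1)" using e[of 0] ps(2) by simp
    have e12: "E (ps ! 1) (ps ! 2)" using e[of 1] ps(2) by (simp add: numeral_2_eq_2)
    have hd: "hd ps = ps ! 0" using ps(2) by (cases ps) auto
    have lst: "last ps = ps ! (length ps - 1)" using ps(2) by (intro last_conv_nth) auto
    show False
    proof (cases "length ps = 3")
      case True
      then have "E (ps ! 2) (ps ! 0)" using ps(3) hd lst by simp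
      then show False using sd e01 e12 by (metis (full_types))
    next
      case False
      then have l4: "4 \<le> length ps" using ps(2) by simp
      have e23: "E (ps ! 2) (ps ! 3)" using e[of 2] l4 by (simp add: numeral_3_eq_3 numeral_2_eq_2)
      obtain z where z: "E (ps ! 3) z" "z \<noteq> ps ! 2"
      proof (cases "length ps = 4")
        case True
        then have "E (ps ! 3) (ps ! 0)" using ps(3) hd lst by simp
        moreover have "ps ! 0 \<noteq> ps ! 2" by (rule dist[OF d]) (use True in \<open>simp_all del: length_greater_0_conv\<close>)
        ultimately show ?thesis using that by blast
      next
        case False
        then have "5 \<le> length ps" using l4 by simp
        then have "E (ps ! 3) (ps ! 4)" using e[of 3] by (simp add: numeral_3_eq_3 eval_nat_numeral)
        moreover have "ps ! 4 \<noteq> ps ! 2" by (rule dist[OF d]) (use \<open>5 \<le> length ps\<close> in \<open>simp_all del: length_greater_0_conv\<close>)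
        ultimately show ?thesis using that by blast
      qed
      have "ps ! 1 = ps ! 3"
      proof (rule uq[OF sym[OF e01] e12 _ sym[OF e23] z(1)])
        show "ps ! 0 \<noteq> ps ! 2" by (rule dist[OF d]) (use l4 in \<open>simp_all del: length_greater_0_conv\<close>)
        show "ps ! 2 \<noteq> z" using z(2) by simp
        show "side (ps ! 1) = side (ps ! 3)" using sd[OF e12] sd[OF e23] by (metis (full_types))
      qed
      moreover have "ps ! 1 \<noteq> ps ! 3" by (rule dist[OF d]) (use l4 in \<open>simp_all del: length_greater_0_conv\<close>)
      ultimately show False by simp
    qed
  qed
  have len: "length ps - 1 \<le> 3" if ps: "is_path V E ps" for ps
  proof (rule ccontr)
    assume "\<not> ?thesis"
    then have l5: "5 \<le> length ps" by simp
    have d: "distinct ps" and e: "\<And>i. Suc i < length ps \<Longrightarrow> E (ps ! i) (ps ! Suc i)"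
      using pathfacts[OF ps] by auto
    have e01: "E (ps ! 0) (ps ! 1)" using e[of 0] l5 by simp
    have e12: "E (ps ! 1) (ps ! 2)" using e[of 1] l5 by (simp add: numeral_2_eq_2)
    have e23: "E (ps ! 2) (ps ! 3)" using e[of 2] l5 by (simp add: numeral_3_eq_3 numeral_2_eq_2)
    have e34: "E (ps ! 3) (ps ! 4)" using e[of 3] l5 by (simp add: numeral_3_eq_3 eval_nat_numeral)
    have "ps ! 1 = ps ! 3"
    proof (rule uq[OF sym[OF e01] e12 _ sym[OF e23] e34])
      show "ps ! 0 \<noteq> ps ! 2" by (rule dist[OF d]) (use l5 in \<open>simp_all del: length_greater_0_conv\<close>)
      show "ps ! 2 \<noteq> ps ! 4" by (rule dist[OF d]) (use l5 in \<open>simp_all del: length_greater_0_conv\<close>)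
      show "side (ps ! 1) = side (ps ! 3)" using sd[OF e12] sd[OF e23] by (metis (full_types))
    qed
    moreover have "ps ! 1 \<noteq> ps ! 3" by (rule dist[OF d]) (use l5 in \<open>simp_all del: length_greater_0_conv\<close>)
    ultimately show False by simp
  qed
  show ?thesis unfolding is_simple_tree_def is_tree_def using cg nc len by blast
qed


lemma length_factor_at [simp]: "length (factor_at x i n) = n"
  by (simp add: factor_at_def)

lemma factor_at_append: "factor_at x i (a + b) = factor_at x i a @ factor_at x (i + int a) b"
proof -
  have u: "[0..<a + b] = [0..<a] @ [a..<a + b]" by (rule upt_add_eq_append) simp
  have v: "[a..<a + b] = map (\<lambda>j. j + a) [0..<b]"
    using map_add_upt[of a b] by (simp add: add.commute)
  have "factor_at x i (a + b) = map (\<lambda>j. x (i + int j)) [0..<a] @ map (\<lambda>j. x (i + int j)) (map (\<lambda>j. j + a) [0..<b])"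
    unfolding factor_at_def u v by simp
  also have "map (\<lambda>j. x (i + int j)) (map (\<lambda>j. j + a) [0..<b]) = map (\<lambda>j. x (i + int a + int j)) [0..<b]"
    by (simp add: algebra_simps)
  finally show ?thesis unfolding factor_at_def .
qed


lemma lang_iff: "w \<in> lang X \<longleftrightarrow> (\<exists>x\<in>X. \<exists>i. w = factor_at x i (length w))"
  by (simp add: lang_def)

lemma lang_fact: "u @ v @ w \<in> lang X \<Longrightarrow> v \<in> lang X"
proof -
  assume "u @ v @ w \<in> lang X"
  then obtain x i where x: "x \<in> X" "u @ v @ w = factor_at x i (length (u @ v @ w))"
    unfolding lang_iff by blast
  have l: "length (u @ v @ w) = length u + (length v + length w)" by simp
  have f1: "factor_at x i (length u + (length v + length w)) =
        factor_at x i (length u) @ factor_at x (i + int (length u)) (length v + length w)"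
    by (rule factor_at_append)
  have f2: "factor_at x (i + int (length u)) (length v + length w) =
        factor_at x (i + int (length u)) (length v) @ factor_at x (i + int (length u) + int (length v)) (length w)"
    by (rule factor_at_append)
  have e: "u @ (v @ w) = factor_at x i (length u) @ (factor_at x (i + int (length u)) (length v) @ factor_at x (i + int (length u) + int (length v)) (length w))"
    using x(2) unfolding l f1 f2 by simp
  have "v @ w = factor_at x (i + int (length u)) (length v) @ factor_at x (i + int (length u) + int (length v)) (length w)"
    using e by (subst (asm) append_eq_append_conv) simp_all
  then have "v = factor_at x (i + int (length u)) (length v)"
    by (subst (asm) append_eq_append_conv) simp_all
  then show "v \<in> lang X" unfolding lang_iff using x(1) by blast
qed

lemma lang_lext: "y \<in> lang X \<Longrightarrow> \<exists>a. a # y \<in> lang X"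
proof -
  assume "y \<in> lang X"
  then obtain x i where x: "x \<in> X" "y = factor_at x i (length y)" unfolding lang_iff by auto
  have "factor_at x (i - 1) (1 + length y) = factor_at x (i - 1) 1 @ factor_at x i (length y)"
    using factor_at_append[of x "i - 1" 1 "length y"] by simp
  also have "factor_at x (i - 1) 1 = [x (i - 1)]" by (simp add: factor_at_def)
  finally have "x (i - 1) # y = factor_at x (i - 1) (length (x (i - 1) # y))" using x(2) by simp
  then show ?thesis unfolding lang_iff using x(1) by blast
qed

lemma lang_rext: "y \<in> lang X \<Longrightarrow> \<exists>b. y @ [b] \<in> lang X"
proof -
  assume "y \<in> lang X"
  then obtain x i where x: "x \<in> X" "y = factor_at x i (length y)" unfolding lang_iff by auto
  have "factor_at x i (length y + 1) = factor_at x i (length y) @ factor_at x (i + int (length y)) 1"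
    by (rule factor_at_append)
  also have "factor_at x (i + int (length y)) 1 = [x (i + int (length y))]" by (simp add: factor_at_def)
  finally have "y @ [x (i + int (length y))] = factor_at x i (length (y @ [x (i + int (length y))]))"
    using x(2) by simp
  then show ?thesis unfolding lang_iff using x(1) by blast
qed


lemma LE_eq: "left_ext X k w = LE (lang X) k w"
  unfolding left_ext_def LE_def lang_n_def using lang_fact[of "[]" _ w X] by auto

lemma RE_eq: "right_ext X k w = RE (lang X) k w"
  unfolding right_ext_def RE_def lang_n_def using lang_fact[of w _ "[]" X] by auto

lemma V_eq: "ext_vertices X k w = GV (lang X) k k w"
  unfolding ext_vertices_def GV_def LE_eq RE_eq ..

lemma adj_eq: "ext_adj X k w = GA (lang X) k k w"
proof (intro ext)
  fix p q
  show "ext_adj X k w p q = GA (lang X) k k w p q"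
  proof (cases p; cases q)
    fix u v assume pq: "p = Inl u" "q = Inr v"
    show ?thesis
    proof
      assume "ext_adj X k w p q"
      then show "GA (lang X) k k w p q" using pq unfolding ext_adj_def V_eq GV_def LE_def RE_def by auto
    next
      assume g: "GA (lang X) k k w p q"
      then have "u @ w @ v \<in> lang X" "length u = k" "length v = k" using pq by auto
      moreover have "u @ w \<in> lang X" using lang_fact[of "[]" "u @ w" v X] calculation(1) by simp
      moreover have "w @ v \<in> lang X" using lang_fact[of u "w @ v" "[]" X] calculation(1) by simp
      ultimately show "ext_adj X k w p q" using pq unfolding ext_adj_def V_eq GV_def LE_def RE_def by auto
    qed
  next
    fix u v assume pq: "p = Inr v" "q = Inl u"
    show ?thesis
    proof
      assume "ext_adj X k w p q"
      then show "GA (lang X) k k w p q" using pq unfolding ext_adj_def V_eq GV_def LE_def RE_def by auto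
    next
      assume g: "GA (lang X) k k w p q"
      then have "u @ w @ v \<in> lang X" "length u = k" "length v = k" using pq by auto
      moreover have "u @ w \<in> lang X" using lang_fact[of "[]" "u @ w" v X] calculation(1) by simp
      moreover have "w @ v \<in> lang X" using lang_fact[of u "w @ v" "[]" X] calculation(1) by simp
      ultimately show "ext_adj X k w p q" using pq unfolding ext_adj_def V_eq GV_def LE_def RE_def by auto
    qed
  qed (auto simp: ext_adj_def)
qed


lemma card_LE1: "card (LE L 1 y) = card {a. a # y \<in> L}"
proof -
  have "LE L 1 y = (\<lambda>a. [a]) ` {a. a # y \<in> L}"
    unfolding LE_def by (auto simp: length_Suc_conv)
  then show ?thesis by (simp add: card_image inj_on_def)
qed

lemma card_RE1: "card (RE L 1 y) = card {b. y @ [b] \<in> L}"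
proof -
  have "RE L 1 y = (\<lambda>a. [a]) ` {b. y @ [b] \<in> L}"
    unfolding RE_def by (auto simp: length_Suc_conv)
  then show ?thesis by (simp add: card_image inj_on_def)
qed

lemma card_GV: "card (GV (L :: 'a::finite list set) 1 1 y) = card {a. a # y \<in> L} + card {b. y @ [b] \<in> L}"
proof -
  have f1: "finite (LE L 1 y)" by (rule finite_subset[OF _ finite_len[of 1]]) (auto simp: LE_def)
  have f2: "finite (RE L 1 y)" by (rule finite_subset[OF _ finite_len[of 1]]) (auto simp: RE_def)
  have "card (GV L 1 1 y) = card (LE L 1 y) + card (RE L 1 y)"
    unfolding GV_def using f1 f2 by (subst card_Un_disjoint) (auto simp: card_image)
  then show ?thesis using card_LE1[of L y] card_RE1[of L y] by simp
qed

lemma card_uedges: "card (uedges (GA L 1 1 y)) = card {(a, b). a # y @ [b] \<in> L}"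
proof -
  have e: "uedges (GA L 1 1 y) = (\<lambda>(a, b). {Inl [a], Inr [b]}) ` {(a, b). a # y @ [b] \<in> L}"
  proof
    show "uedges (GA L 1 1 y) \<subseteq> (\<lambda>(a, b). {Inl [a], Inr [b]}) ` {(a, b). a # y @ [b] \<in> L}"
    proof
      fix e assume "e \<in> uedges (GA L 1 1 y)"
      then obtain p q where pq: "e = {p, q}" "GA L 1 1 y p q" unfolding uedges_def by blast
      show "e \<in> (\<lambda>(a, b). {Inl [a], Inr [b]}) ` {(a, b). a # y @ [b] \<in> L}"
      proof (cases p; cases q)
        fix u v assume "p = Inl u" "q = Inr v"
        then obtain a b where "u = [a]" "v = [b]" "a # y @ [b] \<in> L" using pq(2) by (auto simp: length_Suc_conv)
        then show ?thesis using pq(1) \<open>p = Inl u\<close> \<open>q = Inr v\<close> by (intro image_eqI[where x="(a, b)"]) auto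
      next
        fix u v assume "p = Inr v" "q = Inl u"
        then obtain a b where "u = [a]" "v = [b]" "a # y @ [b] \<in> L" using pq(2) by (auto simp: length_Suc_conv)
        then show ?thesis using pq(1) \<open>p = Inr v\<close> \<open>q = Inl u\<close>
          by (intro image_eqI[where x="(a, b)"]) (auto simp: insert_commute)
      qed (use pq in auto)
    qed
  next
    show "(\<lambda>(a, b). {Inl [a], Inr [b]}) ` {(a, b). a # y @ [b] \<in> L} \<subseteq> uedges (GA L 1 1 y)"
      unfolding uedges_def by force
  qed
  have "inj_on (\<lambda>(a, b). {Inl [a], Inr [b]}) {(a, b). a # y @ [b] \<in> L}"
    by (auto simp: inj_on_def doubleton_eq_iff)
  then show ?thesis unfolding e by (rule card_image)
qed


lemma wl_lang:
  fixes X :: "(int \<Rightarrow> 'a::finite) set"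
  assumes T: "\<And>w. w \<in> lang_ge X m \<Longrightarrow> is_tree (ext_vertices X 1 w) (ext_adj X 1 w)"
  shows "wl (lang X) m"
proof
  fix u v w :: "'a list" assume "u @ v @ w \<in> lang X" then show "v \<in> lang X" by (rule lang_fact)
next
  fix y :: "'a list" assume "y \<in> lang X" then show "\<exists>a. a # y \<in> lang X" by (rule lang_lext)
next
  fix y :: "'a list" assume "y \<in> lang X" then show "\<exists>b. y @ [b] \<in> lang X" by (rule lang_rext)
next
  fix y :: "'a list" assume y: "y \<in> lang X" "m \<le> length y"
  then have t: "is_tree (GV (lang X) 1 1 y) (GA (lang X) 1 1 y)"
    using T[of y] unfolding lang_ge_def V_eq adj_eq by simp
  then show "CONN (lang X) 1 1 y"
    unfolding CONN_def is_tree_def connected_graph_def using path_walk by metis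
next
  fix y :: "'a list" assume y: "y \<in> lang X" "m \<le> length y"
  have t: "is_tree (ext_vertices X 1 y) (ext_adj X 1 y)" using T[of y] y unfolding lang_ge_def by simp
  have "card (uedges (ext_adj X 1 y)) + 1 \<le> card (ext_vertices X 1 y)"
  proof (rule forest_bound[OF _ _ refl])
    have f1: "finite (LE (lang X) 1 y)" by (rule finite_subset[OF _ finite_len[of 1]]) (auto simp: LE_def)
    have f2: "finite (RE (lang X) 1 y)" by (rule finite_subset[OF _ finite_len[of 1]]) (auto simp: RE_def)
    show "finite (ext_vertices X 1 y)" unfolding V_eq GV_def using f1 f2 by simp
    show "ext_vertices X 1 y \<noteq> {}" using t unfolding is_tree_def connected_graph_def by blast
    show "ext_adj X 1 y b a" if "ext_adj X 1 y a b" for a b using that GA_sym unfolding adj_eq by blast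
    show "a \<in> ext_vertices X 1 y \<and> b \<in> ext_vertices X 1 y" if "ext_adj X 1 y a b" for a b
      using that unfolding ext_adj_def by blast
    show "\<not> ext_adj X 1 y a a" for a unfolding adj_eq by (cases a) auto
    show "\<not> has_cycle (ext_vertices X 1 y) (ext_adj X 1 y)" using t unfolding is_tree_def by blast
  qed
  then show "card {(a, b). a # y @ [b] \<in> lang X} + 1 \<le> card {a. a # y \<in> lang X} + card {b. y @ [b] \<in> lang X}"
    unfolding V_eq adj_eq card_uedges card_GV .
qed

theorem mainTheorem8:
  fixes X :: "(int \<Rightarrow> 'a::finite) set"
  assumes "shift_space X"
    and "eventually_dendric X"
    and "1 \<le> k"
  shows "\<exists>n\<ge>1. \<forall>w \<in> lang_ge X n.
           is_simple_tree (ext_vertices X k w) (ext_adj X k w)"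
proof -
  obtain m where m: "\<And>w. w \<in> lang_ge X m \<Longrightarrow> is_tree (ext_vertices X 1 w) (ext_adj X 1 w)"
    using assms(2) unfolding eventually_dendric_def by blast
  interpret wl "lang X" m by (rule wl_lang[OF m])
  obtain n where n: "\<And>w. w \<in> lang X \<Longrightarrow> n \<le> length w \<Longrightarrow>
      CONN (lang X) k k w \<and> NLU (lang X) k w \<and> NRU (lang X) k w"
    using main_abs[OF assms(3)] by blast
  have "is_simple_tree (ext_vertices X k w) (ext_adj X k w)" if w: "w \<in> lang_ge X (max n 1)" for w
  proof -
    have w': "w \<in> lang X" "n \<le> length w" using w unfolding lang_ge_def by auto
    have C: "CONN (lang X) k k w" and NL: "NLU (lang X) k w" and NR: "NRU (lang X) k w"
      using n[OF w'] by auto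
    let ?E = "GA (lang X) k k w"
    have "is_simple_tree (GV (lang X) k k w) ?E"
    proof (rule simple_tree_crit[where side = isl])
      show "?E y x" if "?E x y" for x y using that by (rule GA_sym)
      show "y \<in> GV (lang X) k k w" if "?E x y" for x y using that by (rule GA_in)
      show "isl x \<noteq> isl y" if "?E x y" for x y using that by (cases x; cases y) auto
      obtain u where "length u = k" "u @ w \<in> lang X" using lext_n[OF w'(1)] by blast
      then have "Inl u \<in> GV (lang X) k k w" unfolding GV_def LE_def by simp
      then show "GV (lang X) k k w \<noteq> {}" by blast
      show "?E\<^sup>*\<^sup>* p q" if "p \<in> GV (lang X) k k w" "q \<in> GV (lang X) k k w" for p q
        using C that unfolding CONN_def by blast
      show "x = y" if h: "?E x a" "?E x b" "a \<noteq> b" "?E y a'" "?E y b'" "a' \<noteq> b'" "isl x = isl y"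
        for x y a b a' b'
      proof (cases x)
        case (Inl u)
        then obtain u' where y: "y = Inl u'" using h(7) by (cases y) auto
        obtain v1 where v1: "a = Inr v1" using h(1) Inl by (cases a) auto
        obtain v2 where v2: "b = Inr v2" using h(2) Inl by (cases b) auto
        obtain v1' where v1': "a' = Inr v1'" using h(4) y by (cases a') auto
        obtain v2' where v2': "b' = Inr v2'" using h(5) y by (cases b') auto
        show ?thesis using NL[unfolded NLU_def, rule_format, of u u' v1 v2 v1' v2'] h Inl y v1 v2 v1' v2'
          by auto
      next
        case (Inr v)
        then obtain v' where y: "y = Inr v'" using h(7) by (cases y) auto
        obtain u1 where u1: "a = Inl u1" using h(1) Inr by (cases a) auto
        obtain u2 where u2: "b = Inl u2" using h(2) Inr by (cases b) auto
        obtain u1' where u1': "a' = Inl u1'" using h(4) y by (cases a') auto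
        obtain u2' where u2': "b' = Inl u2'" using h(5) y by (cases b') auto
        show ?thesis using NR[unfolded NRU_def, rule_format, of v v' u1 u2 u1' u2'] h Inr y u1 u2 u1' u2'
          by auto
      qed
    qed
    then show ?thesis unfolding V_eq adj_eq .
  qed
  then show ?thesis by (intro exI[of _ "max n 1"]) auto
qed


end
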